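(* Let $M\subseteq\mathbb{C}^2$ be a set of pairwise distinct vectors, let $\mu:\mathbb{C}^2\otimes\mathbb{C}^2\to\mathbb{C}^2$ be a linear map that is associative, i.e. $\mu\circ(\mu\otimes\mathrm{id}) = \mu\circ(\mathrm{id}\otimes\mu)$, and let $e\in M$ be a unit for $\mu$, i.e. $\mu(e\otimes m) = m = \mu(m\otimes e)$ for all $m\in M$. Then the monoid $(M,\mu)$ is commutative: $\mu(a\otimes b) = \mu(b\otimes a)$ for all $a,b\in M$.
   Context: Such a triple $(M,\mu,e)$ is called a monoid over $\mathbb{H}=\mathbb{C}^2$. *)

theory Defs
  imports "HOL-Analysis.Analysis"
begin

text \<open>The tensor product C^2 (x) C^2 is realised concretely as the 4-dimensional
  space complex^(2\<times>2) (coordinates indexed by pairs (i,j)); the elementary tensor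
  a (x) b has coordinates a_i * b_j.\<close>

definition tensor2 :: "complex^2 \<Rightarrow> complex^2 \<Rightarrow> complex^(2\<times>2)" where
  "tensor2 a b = (\<chi> p. a $ fst p * b $ snd p)"

end

theory Submission
  imports Defs
begin

lemma t_addL: "tensor2 (x + y) z = tensor2 x z + tensor2 y z"
  by (simp add: tensor2_def vec_eq_iff algebra_simps)
lemma t_addR: "tensor2 z (x + y) = tensor2 z x + tensor2 z y"
  by (simp add: tensor2_def vec_eq_iff algebra_simps)
lemma t_scL: "tensor2 (c *s x) z = c *s tensor2 x z"
  by (simp add: tensor2_def vec_eq_iff algebra_simps)
lemma t_scR: "tensor2 z (c *s x) = c *s tensor2 z x"
  by (simp add: tensor2_def vec_eq_iff algebra_simps)

lemma vec2_eq: "(x::complex^2) = y \<longleftrightarrow> x$1 = y$1 \<and> x$2 = y$2"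
  by (auto simp: vec_eq_iff forall_2)

lemma dep:
  fixes e a b :: "complex^2"
  assumes "e \<noteq> 0"
  shows "(\<exists>c. a = c *s e) \<or> (\<exists>c1 c2. b = c1 *s e + c2 *s a)"
proof (cases "e$1 * a$2 - e$2 * a$1 = 0")
  case True
  show ?thesis
  proof (cases "e$1 = 0")
    case True
    with assms have "e$2 \<noteq> 0" by (auto simp: vec2_eq)
    then have "a = (a$2 / e$2) *s e" using True \<open>e$1 * a$2 - e$2 * a$1 = 0\<close>
      by (auto simp: vec2_eq field_simps)
    then show ?thesis by blast
  next
    case False
    then have "a = (a$1 / e$1) *s e" using \<open>e$1 * a$2 - e$2 * a$1 = 0\<close>
      by (auto simp: vec2_eq field_simps)
    then show ?thesis by blast
  qed
next
  case False
  define d where "d = e$1 * a$2 - e$2 * a$1"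
  have d: "d \<noteq> 0" using False d_def by simp
  have "b = ((b$1 * a$2 - b$2 * a$1)/d) *s e + ((e$1 * b$2 - e$2 * b$1)/d) *s a"
    unfolding vec2_eq using d
    by (simp add: field_simps, simp add: d_def algebra_simps)
  then show ?thesis by blast
qed

theorem proposition4p2:
  fixes M :: "(complex^2) set"
    and \<mu> :: "complex^(2\<times>2) \<Rightarrow> complex^2"
    and e :: "complex^2"
  assumes lin: "Vector_Spaces.linear (*s) (*s) \<mu>"
    and assoc: "\<forall>a b c. \<mu> (tensor2 (\<mu> (tensor2 a b)) c) = \<mu> (tensor2 a (\<mu> (tensor2 b c)))"
    and eM: "e \<in> M"
    and unit: "\<forall>m\<in>M. \<mu> (tensor2 e m) = m \<and> \<mu> (tensor2 m e) = m"
  shows "\<forall>a\<in>M. \<forall>b\<in>M. \<mu> (tensor2 a b) = \<mu> (tensor2 b a)"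
proof (intro ballI)
  fix a b assume aM: "a \<in> M" and bM: "b \<in> M"
  have add: "\<mu> (x + y) = \<mu> x + \<mu> y" for x y
    using lin unfolding Vector_Spaces.linear_def module_hom_def module_hom_axioms_def by blast
  have sc: "\<mu> (c *s x) = c *s \<mu> x" for c x
    using lin unfolding Vector_Spaces.linear_def module_hom_def module_hom_axioms_def by blast
  have ea: "\<mu> (tensor2 e a) = a" "\<mu> (tensor2 a e) = a" using unit aM by auto
  have eb: "\<mu> (tensor2 e b) = b" "\<mu> (tensor2 b e) = b" using unit bM by auto
  show "\<mu> (tensor2 a b) = \<mu> (tensor2 b a)"
  proof (cases "e = 0")
    case True
    have z: "tensor2 0 x = 0 *s tensor2 0 x" for x by (simp add: tensor2_def vec_eq_iff)
    have "\<mu> (tensor2 0 x) = 0" for x by (subst z, subst sc) simp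
    then have "a = 0" using ea True by simp
    moreover have "b = 0" using eb True \<open>\<And>x. \<mu> (tensor2 0 x) = 0\<close> by simp
    ultimately show ?thesis by simp
  next
    case False
    from dep[OF False, of a b] show ?thesis
    proof
      assume "\<exists>c. a = c *s e"
      then obtain c where c: "a = c *s e" by blast
      show ?thesis unfolding c t_scL t_scR sc eb ..
    next
      assume "\<exists>c1 c2. b = c1 *s e + c2 *s a"
      then obtain c1 c2 where c: "b = c1 *s e + c2 *s a" by blast
      show ?thesis unfolding c t_addL t_addR t_scL t_scR add sc ea ..
    qed
  qed
qed

end
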